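(* Suppose $G_{ii}>0$ for every $i\in\{1,\dots,p\}$. Then the problem $\min_{u\in\mathbb{R}^H}F(u)$, with $F(u):=p\log\big(\sum_{i=1}^pe^{(Bu)_i}G_{ii}\big)-\sum_{i=1}^p(Bu)_i$, has a solution.
   Context: $\mathcal G=(V,E)$ is a finite DAG; input neurons have no incoming edges, output neurons no outgoing edges, hidden neurons $\mathcal H$ ($H=|\mathcal H|$) are the rest. $\theta\in\mathbb{R}^p$ consists of one weight per edge and one bias $b_v$ per non-input neuron $v$. For $h\in\mathcal H$, $\mathrm{in}_h$ = indices of $b_h$ and of weights of edges entering $h$, $\mathrm{out}_h$ = indices of weights of edges leaving $h$. $B\in\mathbb{R}^{p\times H}$ has $B_{ih}=-1$ if $i\in\mathrm{in}_h$, $1$ if $i\in\mathrm{out}_h$, $0$ otherwise. $G=\partial\Phi(\theta)^\top\partial\Phi(\theta)$ where $\Phi:\mathbb{R}^p\to\mathbb{R}^q$ is the path-lifting: for each path $v_0\to\cdots\to v_d$ along edges ending at an output neuron (for $d=0$, $v_0$ non-input), the coordinate is the product of the weights along the path, times $b_{v_0}$ if $v_0$ is not an input neuron. *)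

theory Defs
  imports "HOL-Analysis.Analysis"
begin

text \<open>Parameters are indexed by the type ('v \<times> 'v) + 'v: Inl e is the weight of
edge e, Inr v is the bias of the (non-input) neuron v.\<close>

definition inputs :: "'v set \<Rightarrow> ('v \<times> 'v) set \<Rightarrow> 'v set" where
  "inputs V E = {v \<in> V. \<forall>u. (u, v) \<notin> E}"

definition outputs :: "'v set \<Rightarrow> ('v \<times> 'v) set \<Rightarrow> 'v set" where
  "outputs V E = {v \<in> V. \<forall>w. (v, w) \<notin> E}"

definition hidden :: "'v set \<Rightarrow> ('v \<times> 'v) set \<Rightarrow> 'v set" where
  "hidden V E = V - inputs V E - outputs V E"

definition params :: "'v set \<Rightarrow> ('v \<times> 'v) set \<Rightarrow> (('v \<times> 'v) + 'v) set" where
  "params V E = Inl ` E \<union> Inr ` (V - inputs V E)"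

definition paths :: "'v set \<Rightarrow> ('v \<times> 'v) set \<Rightarrow> 'v list set" where
  "paths V E = {\<gamma>. \<gamma> \<noteq> [] \<and> set \<gamma> \<subseteq> V \<and> successively (\<lambda>a b. (a, b) \<in> E) \<gamma>
      \<and> last \<gamma> \<in> outputs V E \<and> (length \<gamma> = 1 \<longrightarrow> hd \<gamma> \<notin> inputs V E)}"

definition path_lift :: "'v set \<Rightarrow> ('v \<times> 'v) set \<Rightarrow> (('v \<times> 'v) + 'v \<Rightarrow> real) \<Rightarrow> 'v list \<Rightarrow> real" where
  "path_lift V E \<theta> \<gamma> =
     prod_list (map (\<lambda>e. \<theta> (Inl e)) (zip \<gamma> (tl \<gamma>)))
     * (if hd \<gamma> \<notin> inputs V E then \<theta> (Inr (hd \<gamma>)) else 1)"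

definition jac :: "'v set \<Rightarrow> ('v \<times> 'v) set \<Rightarrow> (('v \<times> 'v) + 'v \<Rightarrow> real) \<Rightarrow> 'v list \<Rightarrow> ('v \<times> 'v) + 'v \<Rightarrow> real" where
  "jac V E \<theta> \<gamma> i = deriv (\<lambda>t. path_lift V E (\<theta>(i := t)) \<gamma>) (\<theta> i)"

definition Gmat :: "'v set \<Rightarrow> ('v \<times> 'v) set \<Rightarrow> (('v \<times> 'v) + 'v \<Rightarrow> real) \<Rightarrow> ('v \<times> 'v) + 'v \<Rightarrow> ('v \<times> 'v) + 'v \<Rightarrow> real" where
  "Gmat V E \<theta> i j = (\<Sum>\<gamma>\<in>paths V E. jac V E \<theta> \<gamma> i * jac V E \<theta> \<gamma> j)"

definition in_idx :: "('v \<times> 'v) set \<Rightarrow> 'v \<Rightarrow> (('v \<times> 'v) + 'v) set" where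
  "in_idx E h = {Inr h} \<union> Inl ` {e \<in> E. snd e = h}"

definition out_idx :: "('v \<times> 'v) set \<Rightarrow> 'v \<Rightarrow> (('v \<times> 'v) + 'v) set" where
  "out_idx E h = Inl ` {e \<in> E. fst e = h}"

definition Bmat :: "('v \<times> 'v) set \<Rightarrow> ('v \<times> 'v) + 'v \<Rightarrow> 'v \<Rightarrow> real" where
  "Bmat E i h = (if i \<in> in_idx E h then -1 else if i \<in> out_idx E h then 1 else 0)"

text \<open>(Bu)_i for u in R^H (u given as a function on vertices; only values on hidden
neurons matter).\<close>
definition Bu :: "'v set \<Rightarrow> ('v \<times> 'v) set \<Rightarrow> ('v \<Rightarrow> real) \<Rightarrow> ('v \<times> 'v) + 'v \<Rightarrow> real" where
  "Bu V E u i = (\<Sum>h\<in>hidden V E. Bmat E i h * u h)"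

definition Fobj :: "'v set \<Rightarrow> ('v \<times> 'v) set \<Rightarrow> (('v \<times> 'v) + 'v \<Rightarrow> real) \<Rightarrow> ('v \<Rightarrow> real) \<Rightarrow> real" where
  "Fobj V E \<theta> u =
     real (card (params V E)) * ln (\<Sum>i\<in>params V E. exp (Bu V E u i) * Gmat V E \<theta> i i)
     - (\<Sum>i\<in>params V E. Bu V E u i)"

end

theory Submission
  imports Defs
begin

lemma Bu_Inr_hidden:
  assumes "h \<in> hidden V E" "finite V"
  shows "Bu V E u (Inr h) = - u h"
proof -
  have "Bu V E u (Inr h) = (\<Sum>h'\<in>hidden V E. (if h' = h then - u h' else 0))"
    unfolding Bu_def by (rule sum.cong) (auto simp: Bmat_def in_idx_def out_idx_def)
  also have "\<dots> = - u h" using assms finite_subset[of "hidden V E" V]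
    by (simp add: sum.delta hidden_def)
  finally show ?thesis .
qed

lemma Bu_Inr_output:
  assumes "w \<in> outputs V E"
  shows "Bu V E u (Inr w) = 0"
  unfolding Bu_def
  by (rule sum.neutral) (use assms in \<open>auto simp: Bmat_def in_idx_def out_idx_def hidden_def\<close>)

lemma Bu_restrict:
  "Bu V E (\<lambda>v. if v \<in> hidden V E then u v else 0) = Bu V E u"
  unfolding Bu_def by (intro ext sum.cong) auto

lemma Fobj_restrict:
  "Fobj V E \<theta> (\<lambda>v. if v \<in> hidden V E then u v else 0) = Fobj V E \<theta> u"
  unfolding Fobj_def Bu_restrict ..

lemma exists_output:
  assumes "finite V" "E \<subseteq> V \<times> V" "acyclic E" "h \<in> hidden V E"
  shows "\<exists>w. w \<in> outputs V E \<and> w \<notin> inputs V E"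
proof -
  have fE: "finite E" using assms(1,2) finite_subset by blast
  have wf: "wf (E\<inverse>)" using finite_acyclic_wf_converse[OF fE assms(3)] .
  have "h \<notin> outputs V E" "h \<in> V" using assms(4) by (auto simp: hidden_def)
  then obtain w0 where "(h, w0) \<in> E" by (auto simp: outputs_def)
  then have ne: "w0 \<in> {w. (h, w) \<in> E\<^sup>+}" by auto
  obtain w where w: "w \<in> {w. (h, w) \<in> E\<^sup>+}" and min: "\<forall>y. (y, w) \<in> E\<inverse> \<longrightarrow> y \<notin> {w. (h, w) \<in> E\<^sup>+}"
    using wf_eq_minimal[THEN iffD1, OF wf, rule_format, OF ne] by blast
  have hw: "(h, w) \<in> E\<^sup>+" using w by simp
  have nout: "\<forall>y. (w, y) \<notin> E"
  proof (intro allI notI)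
    fix y assume "(w, y) \<in> E"
    then have "(h, y) \<in> E\<^sup>+" using hw by (meson trancl.trancl_into_trancl)
    then show False using min \<open>(w, y) \<in> E\<close> by auto
  qed
  obtain z where "(z, w) \<in> E" using hw by (metis tranclE)
  then have "w \<in> V" using assms(2) by auto
  show ?thesis
    using nout \<open>w \<in> V\<close> \<open>(z, w) \<in> E\<close> by (auto simp: outputs_def inputs_def)
qed

lemma Fobj_lower:
  fixes P :: "'a set" and x c :: "'a \<Rightarrow> real"
  assumes fP: "finite P" and c: "\<forall>i\<in>P. c i > 0" and cm: "\<forall>i\<in>P. cmin \<le> c i" and cmpos: "cmin > 0"
    and j: "j \<in> P" and k: "k \<in> P"
  shows "real (card P) * ln (\<Sum>i\<in>P. exp (x i) * c i) - (\<Sum>i\<in>P. x i)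
         \<ge> real (card P) * ln cmin + x j - x k"
proof -
  have ne: "P \<noteq> {}" using j by auto
  define M where "M = Max (x ` P)"
  have "M \<in> x ` P" unfolding M_def using fP ne by (intro Max_in) auto
  then obtain m where m: "m \<in> P" "x m = M" by auto
  have xM: "\<forall>i\<in>P. x i \<le> M" unfolding M_def using fP by auto
  have p1: "card P \<ge> 1" using fP ne by (simp add: Suc_le_eq card_gt_0_iff)
  have "exp M * cmin \<le> exp (x m) * c m" using cm m by simp
  also have "exp (x m) * c m \<le> (\<Sum>i\<in>P. exp (x i) * c i)"
    using m(1) fP c by (intro member_le_sum) (auto intro: mult_nonneg_nonneg less_imp_le)
  finally have le1: "exp M * cmin \<le> (\<Sum>i\<in>P. exp (x i) * c i)" .
  have "ln (exp M * cmin) \<le> ln (\<Sum>i\<in>P. exp (x i) * c i)"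
    using le1 cmpos by (subst ln_le_cancel_iff) (auto intro: order_less_le_trans[OF _ le1])
  then have L: "M + ln cmin \<le> ln (\<Sum>i\<in>P. exp (x i) * c i)" using cmpos by (simp add: ln_mult)
  have "(\<Sum>i\<in>P. x i) = x k + (\<Sum>i\<in>P - {k}. x i)" using fP k by (simp add: sum.remove)
  also have "(\<Sum>i\<in>P - {k}. x i) \<le> real (card (P - {k})) * M"
    using xM by (intro sum_bounded_above) auto
  also have "real (card (P - {k})) = real (card P) - 1" using fP k p1 by (simp add: of_nat_diff)
  finally have S: "(\<Sum>i\<in>P. x i) \<le> x k + (real (card P) - 1) * M" by simp
  have "real (card P) * (M + ln cmin) \<le> real (card P) * ln (\<Sum>i\<in>P. exp (x i) * c i)"
    using L by (intro mult_left_mono) auto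
  moreover have "x j \<le> M" using xM j by auto
  moreover have "real (card P) * (M + ln cmin) = real (card P) * M + real (card P) * ln cmin"
    by (simp add: distrib_left)
  moreover have "(real (card P) - 1) * M = real (card P) * M - M" by (simp add: left_diff_distrib)
  ultimately show ?thesis using S by linarith
qed

lemma coord: "continuous_on S (\<lambda>x::'a\<Rightarrow>real. x i)"
  by (rule continuous_on_subset[OF continuous_on_product_coordinates]) auto

theorem corollaryF6:
  fixes V :: "'v set" and E :: "('v \<times> 'v) set" and \<theta> :: "('v \<times> 'v) + 'v \<Rightarrow> real"
  assumes "finite V" and "E \<subseteq> V \<times> V" and "acyclic E"
    and "\<forall>i\<in>params V E. Gmat V E \<theta> i i > 0"
  shows "\<exists>u :: 'v \<Rightarrow> real. \<forall>w :: 'v \<Rightarrow> real. Fobj V E \<theta> u \<le> Fobj V E \<theta> w"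
proof (cases "hidden V E = {}")
  case True
  have eq: "\<And>u. Fobj V E \<theta> u = Fobj V E \<theta> (\<lambda>_. 0)" unfolding Fobj_def Bu_def using True by simp
  show ?thesis
  proof (intro exI allI)
    fix w show "Fobj V E \<theta> (\<lambda>_. 0) \<le> Fobj V E \<theta> w" using eq[of w] by simp
  qed
next
  case False
  then obtain h0 where h0: "h0 \<in> hidden V E" by auto
  define P where "P = params V E"
  define H where "H = hidden V E"
  define c where "c i = Gmat V E \<theta> i i" for i
  define F where "F = Fobj V E \<theta>"
  have fE: "finite E" using assms(1,2) finite_subset by blast
  have fP: "finite P" unfolding P_def params_def using fE assms(1) by simp
  have fH: "finite H" unfolding H_def hidden_def using assms(1) by simp
  obtain w0 where w0: "w0 \<in> outputs V E" "w0 \<notin> inputs V E"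
    using exists_output[OF assms(1-3) h0] by blast
  have i0: "Inr w0 \<in> P" using w0 unfolding P_def params_def outputs_def by blast
  have Bi0: "\<And>u. Bu V E u (Inr w0) = 0" using Bu_Inr_output[OF w0(1)] .
  have HP: "\<And>h. h \<in> H \<Longrightarrow> Inr h \<in> P" unfolding H_def P_def params_def hidden_def by blast
  have BH: "\<And>h u. h \<in> H \<Longrightarrow> Bu V E u (Inr h) = - u h"
    unfolding H_def by (rule Bu_Inr_hidden[OF _ assms(1)])
  have cpos: "\<forall>i\<in>P. c i > 0" using assms(4) by (simp add: P_def c_def)
  define cmin where "cmin = Min (c ` P)"
  have cmpos: "cmin > 0" unfolding cmin_def using fP i0 cpos by (subst Min_gr_iff) auto
  have cm: "\<forall>i\<in>P. cmin \<le> c i" unfolding cmin_def using fP by auto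
  define C where "C = real (card P) * ln cmin"
  have Fform: "F u = real (card P) * ln (\<Sum>i\<in>P. exp (Bu V E u i) * c i) - (\<Sum>i\<in>P. Bu V E u i)" for u
    unfolding F_def Fobj_def P_def c_def ..
  have lower: "F u \<ge> C + \<bar>u h\<bar>" if "h \<in> H" for u h
  proof -
    have a: "F u \<ge> C + Bu V E u (Inr w0) - Bu V E u (Inr h)"
      unfolding Fform C_def by (rule Fobj_lower[OF fP cpos cm cmpos i0 HP[OF that], of "\<lambda>i. Bu V E u i"])
    have b: "F u \<ge> C + Bu V E u (Inr h) - Bu V E u (Inr w0)"
      unfolding Fform C_def by (rule Fobj_lower[OF fP cpos cm cmpos HP[OF that] i0, of "\<lambda>i. Bu V E u i"])
    show ?thesis using a b BH[OF that] Bi0 by auto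
  qed
  define K where "K = F (\<lambda>_. 0) - C"
  have K0: "K \<ge> 0" using lower[OF h0[folded H_def], of "\<lambda>_. 0"] by (simp add: K_def)
  define U where "U = PiE UNIV (\<lambda>v. if v \<in> H then {-K..K} else {0::real})"
  have U0: "(\<lambda>_. 0) \<in> U" unfolding U_def PiE_iff using K0 by simp
  have "compactin (product_topology (\<lambda>_. euclidean) UNIV) U"
    unfolding U_def compactin_PiE by (rule disjI2) simp
  then have cU: "compact U" by (simp add: euclidean_product_topology)
  have pos: "(\<Sum>i\<in>P. exp (Bu V E u i) * c i) > 0" for u
    using fP i0 cpos by (intro sum_pos mult_pos_pos exp_gt_zero) auto
  have cB: "continuous_on U (\<lambda>u. Bu V E u i)" for i
    unfolding Bu_def by (intro continuous_intros coord)
  have cS: "continuous_on U (\<lambda>u. \<Sum>i\<in>P. exp (Bu V E u i) * c i)"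
    by (intro continuous_intros cB)
  have cL: "continuous_on U (\<lambda>u. ln (\<Sum>i\<in>P. exp (Bu V E u i) * c i))"
    by (rule continuous_on_ln[OF cS]) (metis pos less_irrefl)
  have contF: "continuous_on U F"
    unfolding Fform[abs_def] by (intro continuous_intros cL cB)
  obtain us where us: "us \<in> U" "\<forall>y\<in>U. F us \<le> F y"
    using continuous_attains_inf[OF cU _ contF] U0 by blast
  show ?thesis
  proof (intro exI allI)
    fix w :: "'v \<Rightarrow> real"
    define w' where "w' = (\<lambda>v. if v \<in> hidden V E then w v else 0)"
    have Fw: "F w' = F w" unfolding w'_def F_def by (rule Fobj_restrict)
    show "Fobj V E \<theta> us \<le> Fobj V E \<theta> w"
    proof (cases "w' \<in> U")
      case True
      then show ?thesis using us Fw by (auto simp: F_def)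
    next
      case False
      have "\<exists>h\<in>H. \<bar>w h\<bar> > K"
      proof (rule ccontr)
        assume "\<not> ?thesis"
        then have "\<forall>h\<in>H. \<bar>w h\<bar> \<le> K" by auto
        then have "w' \<in> U" unfolding U_def w'_def H_def PiE_iff
          by (auto simp: abs_le_iff)
        then show False using False by simp
      qed
      then obtain h where h: "h \<in> H" "\<bar>w h\<bar> > K" by blast
      have "F w \<ge> C + \<bar>w h\<bar>" using lower[OF h(1)] .
      then have "F w > F (\<lambda>_. 0)" using h(2) by (simp add: K_def)
      moreover have "F us \<le> F (\<lambda>_. 0)" using us U0 by auto
      ultimately show ?thesis by (simp add: F_def)
    qed
  qed
qed

end
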